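(* For every $A\in\mathcal{B}$, with $g_{11},g_{12}$ as defined from $A$, $$\phi(A)=\begin{pmatrix}g_{11}&g_{12}\\ -\det(A)\,(1+t^{-1}+t)\,\overline{g_{12}} & \det(A)\,\overline{g_{11}}\end{pmatrix}.$$
   Context: For a matrix $A$ or Laurent polynomial/rational function $f$ in $t$, $\overline{A}$, $\overline{f}$ denote the result of substituting $t\mapsto t^{-1}$. Let $J_3=\begin{pmatrix}1&-t^{-1}&-t^{-1}\\-t&1&-t^{-1}\\-t&-t&1\end{pmatrix}$, $v=(t,t^2,t^3)$ (a row vector) and $\vec{1}=(1,1,1)^T$. The formal Burau group is $\mathcal{B}=\{A\in\mathrm{GL}(3,\mathbb{Z}[t,t^{-1}]) : vA=v,\ A\vec 1=\vec 1,\ \overline{A}J_3A^T=J_3\}$. For $A=(A_{ij})\in\mathcal{B}$ put, for $k=1,2$, $f_{k1}=A_{k1}(1+t+t^2)-1$, $f_{k2}=A_{k1}+A_{k2}(1+t)-1$, and $g_{kl}=f_{kl}/(t(1+t))$. Define $\phi(A)=\begin{pmatrix}g_{11}&g_{12}\\ t^{-1}g_{11}+(1+t)g_{21}& t^{-1}g_{12}+(1+t)g_{22}\end{pmatrix}$. *)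

theory Defs
  imports "HOL-Analysis.Analysis" "HOL-Computational_Algebra.Polynomial"
          "HOL-Computational_Algebra.Fraction_Field"
begin

text \<open>Rational functions in t over the integers: the field of fractions of Z[t].
  Laurent polynomials Z[t,t^-1] are the subring of elements p / t^k.\<close>

type_synonym rfun = "int poly fract"

definition T :: rfun where "T = Fract [:0, 1:] 1"

definition laurent :: "rfun \<Rightarrow> bool" where
  "laurent x \<longleftrightarrow> (\<exists>p k. x = Fract p (monom 1 k))"

text \<open>p(t^-1) for a polynomial p: reflect_poly p / t^(degree p).\<close>
definition bar_poly :: "int poly \<Rightarrow> rfun" where
  "bar_poly p = Fract (reflect_poly p) (monom 1 (degree p))"

text \<open>The substitution t \<mapsto> t^-1 on rational functions.\<close>
definition bar :: "rfun \<Rightarrow> rfun" where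
  "bar x = (SOME y. \<exists>p q. q \<noteq> 0 \<and> x = Fract p q \<and> y = bar_poly p / bar_poly q)"

definition bar_mat :: "rfun^'n^'m \<Rightarrow> rfun^'n^'m" where
  "bar_mat A = (\<chi> i j. bar (A $ i $ j))"

definition laurent_mat :: "rfun^'n^'m \<Rightarrow> bool" where
  "laurent_mat A \<longleftrightarrow> (\<forall>i j. laurent (A $ i $ j))"

definition GL3_laurent :: "(rfun^3^3) set" where
  "GL3_laurent = {A. laurent_mat A \<and>
     (\<exists>B. laurent_mat B \<and> A ** B = mat 1 \<and> B ** A = mat 1)}"

definition J3 :: "rfun^3^3" where
  "J3 = vector [vector [1, - inverse T, - inverse T],
                vector [- T, 1, - inverse T],
                vector [- T, - T, 1]]"

definition vB :: "rfun^3" where "vB = vector [T, T^2, T^3]"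

definition one3 :: "rfun^3" where "one3 = vector [1, 1, 1]"

definition burau_group :: "(rfun^3^3) set" where
  "burau_group = {A \<in> GL3_laurent. vB v* A = vB \<and> A *v one3 = one3 \<and>
                    bar_mat A ** J3 ** transpose A = J3}"

text \<open>Entries are indexed 1,2,3 (in the numeral types 2 and 3).\<close>
definition f_fun :: "rfun^3^3 \<Rightarrow> 3 \<Rightarrow> nat \<Rightarrow> rfun" where
  "f_fun A k l = (if l = 1 then A $ k $ 1 * (1 + T + T^2) - 1
                  else A $ k $ 1 + A $ k $ 2 * (1 + T) - 1)"

definition g_fun :: "rfun^3^3 \<Rightarrow> 3 \<Rightarrow> nat \<Rightarrow> rfun" where
  "g_fun A k l = f_fun A k l / (T * (1 + T))"

definition phi :: "rfun^3^3 \<Rightarrow> rfun^2^2" where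
  "phi A = vector [vector [g_fun A 1 1, g_fun A 1 2],
                   vector [inverse T * g_fun A 1 1 + (1 + T) * g_fun A 2 1,
                           inverse T * g_fun A 1 2 + (1 + T) * g_fun A 2 2]]"

end

theory Submission
  imports Defs
begin

definition ev :: "rfun \<Rightarrow> int poly \<Rightarrow> rfun" where
  "ev x p = (\<Sum>i\<le>degree p. of_int (coeff p i) * x ^ i)"

lemma ev_n: "degree p \<le> n \<Longrightarrow> ev x p = (\<Sum>i\<le>n. of_int (coeff p i) * x ^ i)"
  unfolding ev_def
  by (rule sum.mono_neutral_left) (auto simp: coeff_eq_0)

lemma ev_add: "ev x (p + q) = ev x p + ev x q"
proof -
  let ?n = "max (degree p) (degree q)"
  have "ev x (p + q) = (\<Sum>i\<le>?n. of_int (coeff (p+q) i) * x ^ i)"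
    by (rule ev_n) (simp add: degree_add_le)
  also have "\<dots> = (\<Sum>i\<le>?n. of_int (coeff p i) * x ^ i) + (\<Sum>i\<le>?n. of_int (coeff q i) * x ^ i)"
    by (simp add: distrib_right sum.distrib)
  also have "\<dots> = ev x p + ev x q" by (simp only: ev_n[of p ?n x, symmetric] ev_n[of q ?n x, symmetric] max.cobounded1 max.cobounded2)
  finally show ?thesis .
qed

lemma ev_smult: "ev x (smult a p) = of_int a * ev x p"
proof -
  have "ev x (smult a p) = (\<Sum>i\<le>degree p. of_int (coeff (smult a p) i) * x ^ i)"
    by (rule ev_n) (simp add: degree_smult_le)
  then show ?thesis by (simp add: ev_def sum_distrib_left mult.assoc)
qed

lemma ev_pCons: "ev x (pCons a p) = of_int a + x * ev x p"
proof -
  have "ev x (pCons a p) = (\<Sum>i\<le>Suc (degree p). of_int (coeff (pCons a p) i) * x ^ i)"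
    by (rule ev_n) (simp add: degree_pCons_le)
  also have "\<dots> = of_int a + (\<Sum>i\<le>degree p. of_int (coeff p i) * x ^ Suc i)"
    by (subst sum.atMost_Suc_shift) simp
  also have "\<dots> = of_int a + x * ev x p"
    by (simp add: ev_def sum_distrib_left mult_ac)
  finally show ?thesis .
qed

lemma ev_0 [simp]: "ev x 0 = 0" by (simp add: ev_def)

lemma ev_mult: "ev x (p * q) = ev x p * ev x q"
  by (induction p rule: pCons_induct) (simp_all add: ev_add ev_smult ev_pCons algebra_simps)

lemma of_int_fract: "(of_int k :: rfun) = Fract [:k:] 1"
proof -
  have "(of_int k :: rfun) = Fract (of_int k) 1"
    by (cases k rule: int_cases) (simp_all add: of_nat_fract del: of_nat_Suc)
  then show ?thesis by (simp add: of_int_poly)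
qed

lemma fract_ev_T: "Fract p 1 = ev T p"
proof (induction p rule: pCons_induct)
  case 0
  then show ?case by (simp add: fract_collapse)
next
  case (pCons a p)
  have "pCons a p = [:a:] + [:0,1:] * p" by simp
  then have "Fract (pCons a p) 1 = Fract [:a:] 1 + T * Fract p 1"
    by (simp add: T_def)
  then show ?case using pCons by (simp add: ev_pCons of_int_fract)
qed

lemma T_nz: "T \<noteq> 0"
  by (simp add: T_def eq_fract Zero_fract_def)

lemma fract_monom: "Fract (monom 1 k) 1 = T ^ k"
proof -
  have "monom (1::int) k = [:0,1:] ^ k" by (simp add: monom_altdef)
  moreover have "Fract (p ^ k) 1 = Fract p 1 ^ k" for p :: "int poly"
  proof (induction k)
    case 0 then show ?case by (simp add: One_fract_def)
  next
    case (Suc k)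
    have "Fract (p ^ Suc k) 1 = Fract p 1 * Fract (p ^ k) 1" by simp
    then show ?case using Suc by simp
  qed
  ultimately show ?thesis by (simp add: T_def)
qed

abbreviation "sT \<equiv> inverse T"

lemma bar_poly_ev: "bar_poly p = ev sT p"
proof -
  let ?n = "degree p"
  have "ev T (reflect_poly p) = (\<Sum>i\<le>?n. of_int (coeff (reflect_poly p) i) * T ^ i)"
    by (rule ev_n) (rule degree_reflect_poly_le)
  also have "\<dots> = (\<Sum>i\<le>?n. of_int (coeff p (?n - i)) * T ^ i)"
    by (rule sum.cong) (auto simp: coeff_reflect_poly)
  also have "\<dots> = (\<Sum>j\<le>?n. of_int (coeff p j) * T ^ (?n - j))"
    by (rule sum.reindex_bij_witness[where i="\<lambda>i. ?n - i" and j="\<lambda>i. ?n - i"]) auto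
  also have "\<dots> = (\<Sum>j\<le>?n. T ^ ?n * (of_int (coeff p j) * sT ^ j))"
    by (rule sum.cong) (auto simp: power_diff T_nz power_inverse field_simps)
  also have "\<dots> = T ^ ?n * ev sT p" by (simp add: ev_def sum_distrib_left)
  finally have 1: "ev T (reflect_poly p) = T ^ ?n * ev sT p" .
  have "bar_poly p = Fract (reflect_poly p) 1 / Fract (monom 1 ?n) 1"
    by (simp add: bar_poly_def)
  also have "\<dots> = ev sT p" by (simp only: fract_monom) (simp only: fract_ev_T 1, simp add: T_nz)
  finally show ?thesis .
qed

lemma ev_nz: "q \<noteq> 0 \<Longrightarrow> ev sT q \<noteq> 0"
  by (simp add: bar_poly_ev[symmetric] bar_poly_def Zero_fract_def eq_fract)

lemma bar_Fract: assumes "q \<noteq> 0" shows "bar (Fract p q) = ev sT p / ev sT q"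
  unfolding bar_def
proof (rule someI2)
  show "\<exists>p' q'. q' \<noteq> 0 \<and> Fract p q = Fract p' q' \<and> ev sT p / ev sT q = bar_poly p' / bar_poly q'"
    using assms by (auto simp: bar_poly_ev)
next
  fix y assume "\<exists>p' q'. q' \<noteq> 0 \<and> Fract p q = Fract p' q' \<and> y = bar_poly p' / bar_poly q'"
  then obtain p' q' where h: "q' \<noteq> 0" "Fract p q = Fract p' q'" "y = ev sT p' / ev sT q'"
    by (auto simp: bar_poly_ev)
  have "p * q' = p' * q" using h assms by (simp add: eq_fract)
  then have "ev sT p * ev sT q' = ev sT p' * ev sT q" by (metis ev_mult)
  moreover have "y * ev sT q' = ev sT p'" using h(3) ev_nz[OF h(1)] by simp
  ultimately have "y * ev sT q * ev sT q' = ev sT p * ev sT q'"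
    by (metis mult.commute mult.assoc)
  then have "y * ev sT q = ev sT p" using ev_nz[OF h(1)] by simp
  then show "y = ev sT p / ev sT q" using ev_nz[OF assms]
    by (simp add: field_simps)
qed

lemma bar_add: "bar (x + y) = bar x + bar y"
proof (cases x rule: Fract_cases)
  case (Fract a b)
  show ?thesis
  proof (cases y rule: Fract_cases)
    case (Fract c d)
    then show ?thesis using \<open>x = Fract a b\<close> \<open>b \<noteq> 0\<close> ev_nz[of b] ev_nz[of d]
      by (simp add: bar_Fract ev_add ev_mult field_simps)
  qed
qed

lemma bar_mult: "bar (x * y) = bar x * bar y"
proof (cases x rule: Fract_cases)
  case (Fract a b)
  show ?thesis
  proof (cases y rule: Fract_cases)
    case (Fract c d)
    then show ?thesis using \<open>x = Fract a b\<close> \<open>b \<noteq> 0\<close> ev_nz[of b] ev_nz[of d]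
      by (simp add: bar_Fract ev_add ev_mult field_simps)
  qed
qed

lemma ev_uminus: "ev x (- p) = - ev x p"
  using ev_smult[of x "-1" p] by simp

lemma bar_uminus: "bar (- x) = - bar x"
proof (cases x rule: Fract_cases)
  case (Fract a b)
  then show ?thesis by (simp add: bar_Fract ev_uminus)
qed

lemma bar_zero: "bar 0 = 0"
  using bar_Fract[of 1 0] by (simp add: fract_collapse)

lemma bar_inverse: "bar (inverse x) = inverse (bar x)"
proof (cases x rule: Fract_cases)
  case (Fract a b)
  show ?thesis
  proof (cases "a = 0")
    case True
    then show ?thesis using Fract by (simp add: bar_zero fract_collapse)
  next
    case False
    then show ?thesis using Fract by (simp add: bar_Fract)
  qed
qed

lemma bar_diff: "bar (x - y) = bar x - bar y"
  using bar_add[of x "- y"] bar_uminus[of y] by simp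

lemma bar_divide: "bar (x / y) = bar x / bar y"
  by (simp add: divide_inverse bar_mult bar_inverse)

lemma bar_one: "bar 1 = 1"
  by (simp add: One_fract_def bar_Fract ev_def)

lemma bar_T: "bar T = sT"
  by (simp add: T_def bar_Fract ev_def)

lemma bar_power: "bar (x ^ n) = bar x ^ n"
  by (induction n) (simp_all add: bar_one bar_mult)


lemma cramer3:
  fixes m11 m12 m13 m21 m22 m23 m31 m32 m33 x1 x2 x3 r1 r2 r3 :: "'a::comm_ring_1"
  assumes "x1*m11 + x2*m12 + x3*m13 = r1" "x1*m21 + x2*m22 + x3*m23 = r2"
    "x1*m31 + x2*m32 + x3*m33 = r3"
  defines "D \<equiv> m11 * m22 * m33 + m12 * m23 * m31 + m13 * m21 * m32 - m11 * m23 * m32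
     - m12 * m21 * m33 - m13 * m22 * m31"
  shows "x1 * D = r1*(m22*m33 - m23*m32) - r2*(m12*m33 - m13*m32) + r3*(m12*m23 - m13*m22)"
    "x2 * D = - r1*(m21*m33 - m23*m31) + r2*(m11*m33 - m13*m31) - r3*(m11*m23 - m13*m21)"
    "x3 * D = r1*(m21*m32 - m22*m31) - r2*(m11*m32 - m12*m31) + r3*(m11*m22 - m12*m21)"
  unfolding D_def assms(1-3)[symmetric] by (simp_all add: algebra_simps)

lemma G2:
  fixes t a11 a12 a13 a21 a22 a23 a31 a32 a33 :: "'a::idom"
  assumes "a11 = 1-t*a21-t^2*a31" "a12=t-t*a22-t^2*a32"
    "a13=1-a11-a12" "a23=1-a21-a22" "a33=1-a31-a32"
  shows "(a11+a12*(1+t)-1+t*(1+t)*(a21+a22*(1+t)-1))*(1+t) = t^2*(-((-t*(a21*a33-a23*a31)-(a11*a33-a13*a31)+(a11*a23-a13*a21))+t*(t*(a21*a32-a22*a31)+(a11*a32-a12*a31)-(a11*a22-a12*a21)))*(1+t+t^2) - (a11*a22*a33+a12*a23*a31+a13*a21*a32-a11*a23*a32-a12*a21*a33-a13*a22*a31)*t^2*(1+t))"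
  unfolding assms(3-5) unfolding assms(1,2) by algebra

lemma G1:
  fixes t a11 a12 a13 a21 a22 a23 a31 a32 a33 :: "'a::idom"
  assumes "a11 = 1-t*a21-t^2*a31" "a12=t-t*a22-t^2*a32"
    "a13=1-a11-a12" "a23=1-a21-a22" "a33=1-a31-a32"
  shows "(a11*(1+t+t^2)-1+t*(1+t)*(a21*(1+t+t^2)-1))*(1+t) = t*(-(1+t+t^2)*(- (t^2)*((-t*(a21*a33-a23*a31)-(a11*a33-a13*a31)+(a11*a23-a13*a21))+t*(t*(a21*a32-a22*a31)+(a11*a32-a12*a31)-(a11*a22-a12*a21))) - (1+t)*((t*(a22*a33-a23*a32)+(a12*a33-a13*a32)-(a12*a23-a13*a22))+t*(t*(a21*a32-a22*a31)+(a11*a32-a12*a31)-(a11*a22-a12*a21))) - (a11*a22*a33+a12*a23*a31+a13*a21*a32-a11*a23*a32-a12*a21*a33-a13*a22*a31)*t^2*(1+t)))"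
  unfolding assms(3-5) unfolding assms(1,2) by algebra

lemma Lgen:
  fixes t u X Y :: "'a::field"
  assumes "t \<noteq> 0" "u \<noteq> 0"
  shows "inverse t * (X/(t*u)) + u*(Y/(t*u)) = (X + t*u*Y)/(t^2*u)"
  using assms by (simp add: field_simps power2_eq_square)

lemma R2gen:
  fixes t u w d b :: "'a::field"
  assumes "t \<noteq> 0" "u \<noteq> 0" "1+inverse t+(inverse t)^2 = w/t^2" "1 + inverse t = u/t"
  shows "d * ((b*(1+inverse t+(inverse t)^2) - 1)/(inverse t*(1+inverse t))) = ((d*b)*w - d*t^2)/u"
  unfolding assms(3) unfolding assms(4) using assms(1,2) by (simp add: field_simps power2_eq_square)

lemma R1gen:
  fixes t u w d b1 b2 :: "'a::field"
  assumes "t \<noteq> 0" "u \<noteq> 0" "1+inverse t+t = w/t" "1 + inverse t = u/t"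
  shows "- d * (1 + inverse t + t) * ((b1 + b2*(1+inverse t) - 1)/(inverse t*(1+inverse t)))
     = - w * ((d*b1)*t + (d*b2)*u - d*t)/u"
  unfolding assms(3) unfolding assms(4) using assms(1,2) by (simp add: field_simps power2_eq_square)

lemma R2'gen:
  fixes t u w d Q2 Q3 :: "'a::field"
  assumes "t \<noteq> 0" "u \<noteq> 0"
  shows "((- (Q2 + t * Q3) / u)*w - d*t^2)/u = (-(Q2+t*Q3)*w - d*t^2*u)/u^2"
  using assms by (simp add: field_simps power2_eq_square)

lemma R1'gen:
  fixes t u w d Q1 Q2 Q3 :: "'a::field"
  assumes "t \<noteq> 0" "u \<noteq> 0"
  shows "- w * ((- (Q2 + t * Q3) / u)*t + (- (Q1 + t * Q3) / (t * u))*u - d*t)/u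
     = (-w*(- (t^2)*(Q2+t*Q3) - u*(Q1+t*Q3) - d*t^2*u)) / (t*u^2)"
  using assms by (simp add: field_simps power2_eq_square)

lemma frac_help1:
  fixes a b t u :: "'a::field"
  assumes "t \<noteq> 0" "u \<noteq> 0" "a * u = t^2 * b"
  shows "a / (t^2*u) = b / u^2"
  using assms by (simp add: field_simps power2_eq_square)

lemma frac_help2:
  fixes a b t u :: "'a::field"
  assumes "t \<noteq> 0" "u \<noteq> 0" "a * u = t * b"
  shows "a / (t^2*u) = b / (t*u^2)"
  using assms by (simp add: field_simps power2_eq_square)

lemma main_scalar:
  fixes t s a11 a12 a13 a21 a22 a23 a31 a32 a33 b1 b2 b3 d :: "'a::field"
  assumes t0: "t \<noteq> 0" and t1: "1 + t \<noteq> 0" and s: "s = inverse t"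
    and r1: "a11 + a12 + a13 = 1" and r2: "a21 + a22 + a23 = 1" and r3: "a31 + a32 + a33 = 1"
    and c1: "t * a11 + t^2 * a21 + t^3 * a31 = t"
    and c2: "t * a12 + t^2 * a22 + t^3 * a32 = t^2"
    and h1: "(b1 - t*b2 - t*b3) * a11 + (- s*b1 + b2 - t*b3) * a12 + (- s*b1 - s*b2 + b3) * a13 = 1"
    and h2: "(b1 - t*b2 - t*b3) * a21 + (- s*b1 + b2 - t*b3) * a22 + (- s*b1 - s*b2 + b3) * a23 = - s"
    and h3: "(b1 - t*b2 - t*b3) * a31 + (- s*b1 + b2 - t*b3) * a32 + (- s*b1 - s*b2 + b3) * a33 = - s"
    and d: "d = a11 * a22 * a33 + a12 * a23 * a31 + a13 * a21 * a32 - a11 * a23 * a32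
     - a12 * a21 * a33 - a13 * a22 * a31"
  shows "s * ((a11*(1+t+t^2) - 1)/(t*(1+t))) + (1+t) * ((a21*(1+t+t^2) - 1)/(t*(1+t)))
          = - d * (1 + s + t) * ((b1 + b2*(1+s) - 1)/(s*(1+s)))"
    and "s * ((a11 + a12*(1+t) - 1)/(t*(1+t))) + (1+t) * ((a21 + a22*(1+t) - 1)/(t*(1+t)))
          = d * ((b1*(1+s+s^2) - 1)/(s*(1+s)))"
proof -
  define x1 where "x1 = b1 - t*b2 - t*b3"
  define x2 where "x2 = - s*b1 + b2 - t*b3"
  define x3 where "x3 = - s*b1 - s*b2 + b3"
  have st: "s * t = 1" using s t0 by simp
  have bx1: "b1 * (1 + t) = - t * (x2 + t * x3)"
    unfolding x2_def x3_def using st by (simp add: algebra_simps)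
  have bx2: "b2 * (1 + t) = - (x1 + t * x3)"
    unfolding x1_def x3_def using st by (simp add: algebra_simps)
  note cr = cramer3[OF h1[folded x1_def x2_def x3_def] h2[folded x1_def x2_def x3_def]
     h3[folded x1_def x2_def x3_def], folded d]
  have e11: "a11 = 1 - t*a21 - t^2*a31"
  proof -
    have "t * (a11 - (1 - t*a21 - t^2*a31)) = 0" using c1 by (simp add: algebra_simps power2_eq_square power3_eq_cube)
    then show ?thesis using t0 by simp
  qed
  have e12: "a12 = t - t*a22 - t^2*a32"
  proof -
    have "t * (a12 - (t - t*a22 - t^2*a32)) = 0" using c2 by (simp add: algebra_simps power2_eq_square power3_eq_cube)
    then show ?thesis using t0 by simp
  qed
  have e13: "a13 = 1 - a11 - a12" using r1 by (simp add: algebra_simps eq_diff_eq)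
  have e23: "a23 = 1 - a21 - a22" using r2 by (simp add: algebra_simps eq_diff_eq)
  have e33: "a33 = 1 - a31 - a32" using r3 by (simp add: algebra_simps eq_diff_eq)
  define Q1 where "Q1 = t*(a22*a33-a23*a32)+(a12*a33-a13*a32)-(a12*a23-a13*a22)"
  define Q2 where "Q2 = -t*(a21*a33-a23*a31)-(a11*a33-a13*a31)+(a11*a23-a13*a21)"
  define Q3 where "Q3 = t*(a21*a32-a22*a31)+(a11*a32-a12*a31)-(a11*a22-a12*a21)"
  have q1: "t * (x1 * d) = Q1" unfolding cr Q1_def using st by (simp add: algebra_simps)
  have q2: "t * (x2 * d) = Q2" unfolding cr Q2_def using st by (simp add: algebra_simps)
  have q3: "t * (x3 * d) = Q3" unfolding cr Q3_def using st by (simp add: algebra_simps)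
  have db1: "d * b1 = - (Q2 + t * Q3) / (1 + t)"
  proof -
    have "d * b1 * (1 + t) = - (t * (x2 * d) + t * (t * (x3 * d)))"
      using arg_cong[OF bx1, of "\<lambda>x. d*x"] by (simp add: algebra_simps)
    then show ?thesis unfolding q2 q3 using t1 by (simp add: eq_divide_eq)
  qed
  have db2: "d * b2 = - (Q1 + t * Q3) / (t * (1 + t))"
  proof -
    have "t * (d * b2 * (1 + t)) = - (t * (x1 * d) + t * (t * (x3 * d)))"
      using arg_cong[OF bx2, of "\<lambda>x. t*(d*x)"] by (simp add: algebra_simps)
    then have "d * b2 * (t * (1 + t)) = - (Q1 + t * Q3)" unfolding q1 q3 by (simp add: mult_ac)
    moreover have nz: "t * (1 + t) \<noteq> 0" using t0 t1 by simp
    ultimately show ?thesis by (simp add: eq_divide_eq)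
  qed
  have hu: "1 + inverse t = (1+t)/t" using t0 by (simp add: field_simps)
  have hw: "1+inverse t+(inverse t)^2 = (1+t+t^2)/t^2" using t0 by (simp add: field_simps power2_eq_square)
  have hv: "1+inverse t+t = (1+t+t^2)/t" using t0 by (simp add: field_simps power2_eq_square)
  have L1: "s * ((a11*(1+t+t^2) - 1)/(t*(1+t))) + (1+t) * ((a21*(1+t+t^2) - 1)/(t*(1+t)))
     = (a11*(1+t+t^2)-1+t*(1+t)*(a21*(1+t+t^2)-1)) / (t^2*(1+t))"
    unfolding s by (rule Lgen[OF t0 t1])
  have L2: "s * ((a11 + a12*(1+t) - 1)/(t*(1+t))) + (1+t) * ((a21 + a22*(1+t) - 1)/(t*(1+t)))
     = (a11+a12*(1+t)-1+t*(1+t)*(a21+a22*(1+t)-1)) / (t^2*(1+t))"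
    unfolding s by (rule Lgen[OF t0 t1])
  have R2: "d * ((b1*(1+s+s^2) - 1)/(s*(1+s))) = ((d*b1)*(1+t+t^2) - d*t^2)/(1+t)"
    unfolding s by (rule R2gen[OF t0 t1 hw hu])
  have R2': "((d*b1)*(1+t+t^2) - d*t^2)/(1+t) = (-(Q2+t*Q3)*(1+t+t^2) - d*t^2*(1+t))/(1+t)^2"
    unfolding db1 by (rule R2'gen[OF t0 t1])
  have R1: "- d * (1 + s + t) * ((b1 + b2*(1+s) - 1)/(s*(1+s)))
     = - (1+t+t^2) * ((d*b1)*t + (d*b2)*(1+t) - d*t)/(1+t)"
    unfolding s by (rule R1gen[OF t0 t1 hv hu])
  have R1': "- (1+t+t^2) * ((d*b1)*t + (d*b2)*(1+t) - d*t)/(1+t)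
     = (-(1+t+t^2)*(- (t^2)*(Q2+t*Q3) - (1+t)*(Q1+t*Q3) - d*t^2*(1+t))) / (t*(1+t)^2)"
    unfolding db1 db2 by (rule R1'gen[OF t0 t1])
  show "s * ((a11*(1+t+t^2) - 1)/(t*(1+t))) + (1+t) * ((a21*(1+t+t^2) - 1)/(t*(1+t)))
          = - d * (1 + s + t) * ((b1 + b2*(1+s) - 1)/(s*(1+s)))"
    unfolding L1 R1 R1'
    by (rule frac_help2[OF t0 t1]) (unfold Q1_def Q2_def Q3_def d, rule G1[OF e11 e12 e13 e23 e33])
  show "s * ((a11 + a12*(1+t) - 1)/(t*(1+t))) + (1+t) * ((a21 + a22*(1+t) - 1)/(t*(1+t)))
          = d * ((b1*(1+s+s^2) - 1)/(s*(1+s)))"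
    unfolding L2 R2 R2'
    by (rule frac_help1[OF t0 t1]) (unfold Q2_def Q3_def d, rule G2[OF e11 e12 e13 e23 e33])
qed

lemma one_T_nz: "1 + T \<noteq> 0"
  by (simp add: T_def One_fract_def Zero_fract_def eq_fract one_pCons)

theorem corollary3p6:
  assumes "A \<in> burau_group"
  shows "phi A = vector [vector [g_fun A 1 1, g_fun A 1 2],
                         vector [- det A * (1 + inverse T + T) * bar (g_fun A 1 2),
                                 det A * bar (g_fun A 1 1)]]"
proof -
  have vA: "vB v* A = vB" and A1: "A *v one3 = one3"
    and H: "bar_mat A ** J3 ** transpose A = J3"
    using assms by (auto simp: burau_group_def)
  define b1 where "b1 = bar (A$1$1)"
  define b2 where "b2 = bar (A$1$2)"
  define b3 where "b3 = bar (A$1$3)"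
  have r1: "A$1$1 + A$1$2 + A$1$3 = 1" using arg_cong[OF A1, of "\<lambda>x. x$1"]
    by (simp add: matrix_vector_mult_def sum_3 one3_def)
  have r2: "A$2$1 + A$2$2 + A$2$3 = 1" using arg_cong[OF A1, of "\<lambda>x. x$2"]
    by (simp add: matrix_vector_mult_def sum_3 one3_def)
  have r3: "A$3$1 + A$3$2 + A$3$3 = 1" using arg_cong[OF A1, of "\<lambda>x. x$3"]
    by (simp add: matrix_vector_mult_def sum_3 one3_def)
  have c1: "T * A$1$1 + T^2 * A$2$1 + T^3 * A$3$1 = T" using arg_cong[OF vA, of "\<lambda>x. x$1"]
    by (simp add: vector_matrix_mult_def sum_3 vB_def)
  have c2: "T * A$1$2 + T^2 * A$2$2 + T^3 * A$3$2 = T^2" using arg_cong[OF vA, of "\<lambda>x. x$2"]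
    by (simp add: vector_matrix_mult_def sum_3 vB_def)
  have Hk: "(bar_mat A ** J3 ** transpose A)$1$k =
     (b1 - T*b2 - T*b3) * A$k$1 + (- sT*b1 + b2 - T*b3) * A$k$2 + (- sT*b1 - sT*b2 + b3) * A$k$3" for k
    by (simp add: matrix_matrix_mult_def sum_3 J3_def bar_mat_def transpose_def b1_def b2_def b3_def
      algebra_simps)
  have HH: "(bar_mat A ** J3 ** transpose A)$1$k = J3$1$k" for k by (simp only: H)
  have h1: "(b1 - T*b2 - T*b3) * A$1$1 + (- sT*b1 + b2 - T*b3) * A$1$2 + (- sT*b1 - sT*b2 + b3) * A$1$3 = 1"
    by (rule trans[OF trans[OF Hk[of 1, symmetric] HH[of 1]]]) (simp add: J3_def)
  have h2: "(b1 - T*b2 - T*b3) * A$2$1 + (- sT*b1 + b2 - T*b3) * A$2$2 + (- sT*b1 - sT*b2 + b3) * A$2$3 = - sT"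
    by (rule trans[OF trans[OF Hk[of 2, symmetric] HH[of 2]]]) (simp add: J3_def)
  have h3: "(b1 - T*b2 - T*b3) * A$3$1 + (- sT*b1 + b2 - T*b3) * A$3$2 + (- sT*b1 - sT*b2 + b3) * A$3$3 = - sT"
    by (rule trans[OF trans[OF Hk[of 3, symmetric] HH[of 3]]]) (simp add: J3_def)
  note ms = main_scalar[OF T_nz one_T_nz refl r1 r2 r3 c1 c2 h1 h2 h3 det_3]
  have g11: "g_fun A 1 1 = (A$1$1*(1+T+T^2) - 1)/(T*(1+T))"
    by (simp add: g_fun_def f_fun_def)
  have g12: "g_fun A 1 2 = (A$1$1 + A$1$2*(1+T) - 1)/(T*(1+T))"
    by (simp add: g_fun_def f_fun_def)
  have g21: "g_fun A 2 1 = (A$2$1*(1+T+T^2) - 1)/(T*(1+T))"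
    by (simp add: g_fun_def f_fun_def)
  have g22: "g_fun A 2 2 = (A$2$1 + A$2$2*(1+T) - 1)/(T*(1+T))"
    by (simp add: g_fun_def f_fun_def)
  have bg11: "bar (g_fun A 1 1) = (b1*(1+sT+sT^2) - 1)/(sT*(1+sT))"
    unfolding g11 by (simp add: bar_divide bar_mult bar_add bar_diff bar_one bar_T bar_power b1_def)
  have bg12: "bar (g_fun A 1 2) = (b1 + b2*(1+sT) - 1)/(sT*(1+sT))"
    unfolding g12 by (simp add: bar_divide bar_mult bar_add bar_diff bar_one bar_T b1_def b2_def)
  show ?thesis
    unfolding phi_def bg11 bg12 unfolding g11 g12 g21 g22
    by (simp only: vec_eq_iff forall_2 vector_2 ms simp_thms)
qed

end
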